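(* Let $\alpha>0$, let $W$ be a standard Brownian motion on a filtered probability space $(\Omega,\{\mathscr{F}_t\},\mathbb{P})$, and let $X$ solve $dX_t=-\alpha X_t\,dt+dW_t$, $X_0=0$. Let $X^*_t=\sup_{0\le s\le t}|X_s|$. There exists a function $\phi:\mathbb{R}_+\to\mathbb{R}_+$ satisfying $\phi(\delta)\to0$ as $\delta\to0$ such that for any stopping time $\tau$ with respect to $\{\mathscr{F}_t\}$ and any $\delta,\lambda>0$, \[ \mathbb{P}\big(\log^{1/2}(1+\alpha\tau)\ge2\lambda,\ X^*_\tau<\delta\lambda\big)\le\phi(\delta)\,\mathbb{P}\big(\log^{1/2}(1+\alpha\tau)\ge\lambda\big). \] *)

theory Defs
  imports "HOL-Probability.Probability"
begin

definition filtered_prob_space :: "'a measure \<Rightarrow> (real \<Rightarrow> 'a measure) \<Rightarrow> bool" where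
  "filtered_prob_space M F \<longleftrightarrow> prob_space M \<and>
     (\<forall>t. space (F t) = space M \<and> sets (F t) \<subseteq> sets M) \<and>
     (\<forall>s t. 0 \<le> s \<longrightarrow> s \<le> t \<longrightarrow> sets (F s) \<subseteq> sets (F t))"

definition std_brownian_motion ::
    "'a measure \<Rightarrow> (real \<Rightarrow> 'a measure) \<Rightarrow> (real \<Rightarrow> 'a \<Rightarrow> real) \<Rightarrow> bool" where
  "std_brownian_motion M F W \<longleftrightarrow>
     (\<forall>t\<ge>0. W t \<in> borel_measurable (F t)) \<and>
     (AE \<omega> in M. W 0 \<omega> = 0 \<and> continuous_on {0..} (\<lambda>t. W t \<omega>)) \<and>
     (\<forall>s t. 0 \<le> s \<longrightarrow> s < t \<longrightarrow>
        distributed M lborel (\<lambda>\<omega>. W t \<omega> - W s \<omega>)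
          (\<lambda>x. ennreal (normal_density 0 (sqrt (t - s)) x))) \<and>
     (\<forall>s t. 0 \<le> s \<longrightarrow> s \<le> t \<longrightarrow> (\<forall>A\<in>sets (F s). \<forall>B\<in>sets borel.
        measure M (A \<inter> {\<omega>\<in>space M. W t \<omega> - W s \<omega> \<in> B})
          = measure M A * measure M {\<omega>\<in>space M. W t \<omega> - W s \<omega> \<in> B}))"

definition ou_solution ::
    "'a measure \<Rightarrow> (real \<Rightarrow> 'a measure) \<Rightarrow> real \<Rightarrow> (real \<Rightarrow> 'a \<Rightarrow> real)
       \<Rightarrow> (real \<Rightarrow> 'a \<Rightarrow> real) \<Rightarrow> bool" where
  "ou_solution M F \<alpha> W X \<longleftrightarrow>
     (\<forall>t\<ge>0. X t \<in> borel_measurable (F t)) \<and>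
     (AE \<omega> in M. X 0 \<omega> = 0 \<and> continuous_on {0..} (\<lambda>t. X t \<omega>) \<and>
        (\<forall>t\<ge>0. X t \<omega> = - \<alpha> * integral {0..t} (\<lambda>s. X s \<omega>) + W t \<omega>))"

definition is_stopping_time :: "(real \<Rightarrow> 'a measure) \<Rightarrow> ('a \<Rightarrow> ennreal) \<Rightarrow> bool" where
  "is_stopping_time F \<tau> \<longleftrightarrow>
     (\<forall>t\<ge>0. {\<omega>\<in>space (F t). \<tau> \<omega> \<le> ennreal t} \<in> sets (F t))"

definition run_max :: "(real \<Rightarrow> 'a \<Rightarrow> real) \<Rightarrow> ('a \<Rightarrow> ennreal) \<Rightarrow> 'a \<Rightarrow> ereal" where
  "run_max X \<tau> \<omega> = (SUP s\<in>{s. 0 \<le> s \<and> ennreal s \<le> \<tau> \<omega>}. ereal \<bar>X s \<omega>\<bar>)"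

definition sqrt_log_clock :: "real \<Rightarrow> ennreal \<Rightarrow> ereal" where
  "sqrt_log_clock \<alpha> t = (if t = \<top> then \<infinity> else ereal (sqrt (ln (1 + \<alpha> * enn2real t))))"

end

theory Submission
  imports Defs
begin


lemma normal_density_le:
  assumes "\<sigma> > 0" shows "normal_density 0 \<sigma> x \<le> 1 / (\<sigma> * sqrt (2*pi))"
proof -
  have e: "exp (-(x - 0)\<^sup>2/ (2 * \<sigma>\<^sup>2)) \<le> 1" using assms by simp
  have "sqrt (2 * pi * \<sigma>\<^sup>2) = \<sigma> * sqrt (2*pi)" using assms
    by (simp add: real_sqrt_mult mult.commute)
  moreover have "\<sigma> * sqrt (2*pi) > 0" using assms by simp
  ultimately show ?thesis unfolding normal_density_def using e
    by (simp add: divide_right_mono)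
qed

lemma gauss_upper:
  assumes P: "prob_space M" and D: "distributed M lborel D (\<lambda>x. ennreal (normal_density 0 \<sigma> x))"
    and s: "\<sigma> > 0" and c: "c > 0"
  shows "measure M {\<omega>\<in>space M. \<bar>D \<omega>\<bar> < c} \<le> c / \<sigma>"
proof -
  have eq: "{\<omega>\<in>space M. \<bar>D \<omega>\<bar> < c} = D -` {-c<..<c} \<inter> space M" by auto
  have "emeasure M (D -` {-c<..<c} \<inter> space M) = (\<integral>\<^sup>+x. ennreal (normal_density 0 \<sigma> x) * indicator {-c<..<c} x \<partial>lborel)"
    by (rule distributed_emeasure[OF D]) simp
  also have "\<dots> \<le> (\<integral>\<^sup>+x. ennreal (1 / (\<sigma> * sqrt (2*pi))) * indicator {-c<..<c} x \<partial>lborel)"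
    apply (rule nn_integral_mono)
    using normal_density_le[OF s] by (auto split: split_indicator intro: ennreal_leI)
  also have "\<dots> = ennreal (1 / (\<sigma> * sqrt (2*pi))) * ennreal (2*c)"
    using c by (subst nn_integral_cmult_indicator) (auto simp: emeasure_lborel_Ioo)
  also have "\<dots> = ennreal (2*c / (\<sigma> * sqrt (2*pi)))"
    using s c by (simp add: ennreal_mult[symmetric])
  finally have "emeasure M {\<omega>\<in>space M. \<bar>D \<omega>\<bar> < c} \<le> ennreal (2*c / (\<sigma> * sqrt (2*pi)))"
    unfolding eq .
  then have "measure M {\<omega>\<in>space M. \<bar>D \<omega>\<bar> < c} \<le> 2*c / (\<sigma> * sqrt (2*pi))"
    unfolding measure_def using s c
    by (intro enn2real_leI) auto
  also have "\<dots> \<le> c / \<sigma>"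
  proof -
    have "2 \<le> sqrt (2*pi)" using pi_gt3 by (simp add: real_le_rsqrt)
    then show ?thesis using s c by (simp add: field_simps)
  qed
  finally show ?thesis .
qed

lemma gauss_tail:
  assumes P: "prob_space M" and D: "distributed M lborel D (\<lambda>x. ennreal (normal_density 0 \<sigma> x))"
    and s: "\<sigma> > 0" and c: "c > 0"
  shows "measure M {\<omega>\<in>space M. \<bar>D \<omega>\<bar> < c} \<le> 1 - exp (-(c/\<sigma>+1)\<^sup>2/2) / 3"
proof -
  interpret prob_space M by fact
  have Dm: "D \<in> borel_measurable M" using distributed_measurable[OF D] by simp
  define m where "m = exp (-(c+\<sigma>)\<^sup>2/(2*\<sigma>\<^sup>2)) / (\<sigma> * sqrt (2*pi))"
  have m0: "m \<ge> 0" unfolding m_def using s by simp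
  have dens: "m \<le> normal_density 0 \<sigma> x" if "x \<in> {c..c+\<sigma>}" for x
  proof -
    have "x\<^sup>2 \<le> (c+\<sigma>)\<^sup>2" using that c s by (intro power_mono) auto
    then have "-(c+\<sigma>)\<^sup>2/(2*\<sigma>\<^sup>2) \<le> -(x - 0)\<^sup>2/(2*\<sigma>\<^sup>2)" using s
      by (simp add: divide_right_mono)
    then have "exp (-(c+\<sigma>)\<^sup>2/(2*\<sigma>\<^sup>2)) \<le> exp (-(x - 0)\<^sup>2/(2*\<sigma>\<^sup>2))" by simp
    moreover have "sqrt (2 * pi * \<sigma>\<^sup>2) = \<sigma> * sqrt (2*pi)" using s
      by (simp add: real_sqrt_mult mult.commute)
    moreover have "\<sigma> * sqrt (2*pi) > 0" using s by simp
    ultimately show ?thesis unfolding normal_density_def m_def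
      by (simp add: divide_right_mono)
  qed
  have "ennreal (m * \<sigma>) = ennreal m * emeasure lborel {c..c+\<sigma>}"
    using s m0 by (simp add: ennreal_mult)
  also have "\<dots> = (\<integral>\<^sup>+x. ennreal m * indicator {c..c+\<sigma>} x \<partial>lborel)"
    by (subst nn_integral_cmult_indicator) auto
  also have "\<dots> \<le> (\<integral>\<^sup>+x. ennreal (normal_density 0 \<sigma> x) * indicator {c..c+\<sigma>} x \<partial>lborel)"
    apply (rule nn_integral_mono)
    using dens by (auto split: split_indicator intro: ennreal_leI)
  also have "\<dots> = emeasure M (D -` {c..c+\<sigma>} \<inter> space M)"
    by (rule distributed_emeasure[OF D, symmetric]) simp
  finally have "m * \<sigma> \<le> measure M (D -` {c..c+\<sigma>} \<inter> space M)"
    using m0 s by (simp add: emeasure_eq_measure)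
  moreover have "m * \<sigma> = exp (-(c/\<sigma>+1)\<^sup>2/2) / sqrt (2*pi)"
  proof -
    have "(c+\<sigma>)\<^sup>2/(2*\<sigma>\<^sup>2) = (c/\<sigma>+1)\<^sup>2/2" using s by (simp add: field_simps power2_eq_square)
    then show ?thesis unfolding m_def using s by simp
  qed
  moreover have "exp (-(c/\<sigma>+1)\<^sup>2/2) / 3 \<le> exp (-(c/\<sigma>+1)\<^sup>2/2) / sqrt (2*pi)"
  proof -
    have "sqrt (2*pi) \<le> 3" using pi_less_4 by (intro real_le_lsqrt) auto
    then show ?thesis by (intro divide_left_mono) auto
  qed
  moreover
  have "measure M ({\<omega>\<in>space M. \<bar>D \<omega>\<bar> < c} \<union> (D -` {c..c+\<sigma>} \<inter> space M))
      = measure M {\<omega>\<in>space M. \<bar>D \<omega>\<bar> < c} + measure M (D -` {c..c+\<sigma>} \<inter> space M)"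
    proof (rule measure_Union)
    show "{\<omega>\<in>space M. \<bar>D \<omega>\<bar> < c} \<in> sets M" using Dm by measurable
    show "D -` {c..c+\<sigma>} \<inter> space M \<in> sets M" using Dm by measurable
  qed auto
  moreover have "measure M ({\<omega>\<in>space M. \<bar>D \<omega>\<bar> < c} \<union> (D -` {c..c+\<sigma>} \<inter> space M)) \<le> 1"
    by (rule prob_le_1)
  ultimately show ?thesis by linarith
qed

lemma indep_blocks:
  assumes fp: "filtered_prob_space M F" and bm: "std_brownian_motion M F W"
    and t0: "t0 \<ge> 0" and h: "h > 0" and A: "A \<in> sets (F t0)"
    and q: "\<And>s. s \<ge> 0 \<Longrightarrow> measure M {\<omega>\<in>space M. \<bar>W (s+h) \<omega> - W s \<omega>\<bar> < c} \<le> q"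
  shows "{\<omega>\<in>space M. \<omega>\<in>A \<and> (\<forall>k<N. \<bar>W (t0 + real (Suc k)*h) \<omega> - W (t0 + real k * h) \<omega>\<bar> < c)}
           \<in> sets (F (t0 + real N * h)) \<and>
         measure M {\<omega>\<in>space M. \<omega>\<in>A \<and> (\<forall>k<N. \<bar>W (t0 + real (Suc k)*h) \<omega> - W (t0 + real k * h) \<omega>\<bar> < c)}
           \<le> measure M A * q^N"
proof (induction N)
  case 0
  have "space (F t0) = space M" using fp unfolding filtered_prob_space_def by auto
  then have "{\<omega>\<in>space M. \<omega>\<in>A \<and> (\<forall>k<0::nat. True)} = A" using sets.sets_into_space[OF A] by auto
  then show ?case using A by simp
next
  case (Suc N)
  define S where "S = {\<omega>\<in>space M. \<omega>\<in>A \<and> (\<forall>k<N. \<bar>W (t0 + real (Suc k)*h) \<omega> - W (t0 + real k * h) \<omega>\<bar> < c)}"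
  define s where "s = t0 + real N * h"
  define t where "t = t0 + real (Suc N) * h"
  have st: "t = s + h" unfolding s_def t_def by (simp add: algebra_simps)
  have s0: "s \<ge> 0" unfolding s_def using t0 h by simp
  have sp: "\<And>u. space (F u) = space M" and sub: "\<And>u. sets (F u) \<subseteq> sets M"
    and mono: "\<And>u v. 0 \<le> u \<Longrightarrow> u \<le> v \<Longrightarrow> sets (F u) \<subseteq> sets (F v)"
    using fp unfolding filtered_prob_space_def by auto
  have P: "prob_space M" using fp unfolding filtered_prob_space_def by auto
  have Wm: "\<And>u. u \<ge> 0 \<Longrightarrow> W u \<in> borel_measurable (F u)" using bm unfolding std_brownian_motion_def by auto
  have ind: "\<And>A B. A\<in>sets (F s) \<Longrightarrow> B\<in>sets borel \<Longrightarrow>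
        measure M (A \<inter> {\<omega>\<in>space M. W t \<omega> - W s \<omega> \<in> B})
          = measure M A * measure M {\<omega>\<in>space M. W t \<omega> - W s \<omega> \<in> B}"
    using bm s0 st h unfolding std_brownian_motion_def by auto
  have IH: "S \<in> sets (F s)" "measure M S \<le> measure M A * q^N" using Suc.IH unfolding S_def s_def by auto
  have Ws: "W s \<in> borel_measurable (F t)"
    by (rule measurable_from_subalg[OF _ Wm[OF s0]]) (use mono[of s t] s0 st h sp in \<open>auto simp: subalgebra_def\<close>)
  have Wt: "W t \<in> borel_measurable (F t)" using Wm s0 st h by simp
  have Iset: "{\<omega>\<in>space M. W t \<omega> - W s \<omega> \<in> {y. \<bar>y\<bar> < c}} \<in> sets (F t)"
  proof -
    have "{\<omega>\<in>space (F t). \<bar>W t \<omega> - W s \<omega>\<bar> < c} \<in> sets (F t)" using Ws Wt by measurable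
    then show ?thesis using sp by simp
  qed
  have eqS: "{\<omega>\<in>space M. \<omega>\<in>A \<and> (\<forall>k<Suc N. \<bar>W (t0 + real (Suc k)*h) \<omega> - W (t0 + real k * h) \<omega>\<bar> < c)}
     = S \<inter> {\<omega>\<in>space M. W t \<omega> - W s \<omega> \<in> {y. \<bar>y\<bar> < c}}"
    unfolding S_def s_def t_def by (auto simp: less_Suc_eq)
  have "S \<inter> {\<omega>\<in>space M. W t \<omega> - W s \<omega> \<in> {y. \<bar>y\<bar> < c}} \<in> sets (F t)"
    using IH(1) mono[of s t] s0 st h Iset by auto
  moreover have "measure M (S \<inter> {\<omega>\<in>space M. W t \<omega> - W s \<omega> \<in> {y. \<bar>y\<bar> < c}}) \<le> measure M A * q^Suc N"
  proof -
    have "measure M (S \<inter> {\<omega>\<in>space M. W t \<omega> - W s \<omega> \<in> {y. \<bar>y\<bar> < c}})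
        = measure M S * measure M {\<omega>\<in>space M. W t \<omega> - W s \<omega> \<in> {y. \<bar>y\<bar> < c}}"
      by (rule ind[OF IH(1)]) simp
    also have "measure M {\<omega>\<in>space M. W t \<omega> - W s \<omega> \<in> {y. \<bar>y\<bar> < c}} \<le> q"
      using q[OF s0] st by simp
    then have "measure M S * measure M {\<omega>\<in>space M. W t \<omega> - W s \<omega> \<in> {y. \<bar>y\<bar> < c}} \<le> measure M S * q"
      by (intro mult_left_mono) auto
    also have "\<dots> \<le> measure M A * q^N * q"
    proof (rule mult_right_mono[OF IH(2)])
      show "0 \<le> q" using q[OF s0] measure_nonneg order_trans by blast
    qed
    finally show ?thesis by (simp add: mult_ac)
  qed
  ultimately show ?case unfolding eqS t_def by simp
qed

lemma path_incr:
  fixes f w :: "real \<Rightarrow> real"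
  assumes cont: "continuous_on {0..} f" and eq: "\<forall>t\<ge>0. f t = - \<alpha> * integral {0..t} f + w t"
    and bnd: "\<And>r. 0 \<le> r \<Longrightarrow> r \<le> T \<Longrightarrow> \<bar>f r\<bar> < b"
    and s: "0 \<le> s" "s + h \<le> T" "h > 0" and a: "\<alpha> > 0"
  shows "\<bar>w (s+h) - w s\<bar> < b * (2 + \<alpha> * h)"
proof -
  have int: "f integrable_on {0..s+h}"
    by (rule integrable_continuous_interval) (rule continuous_on_subset[OF cont], auto)
  have comb: "integral {0..s} f + integral {s..s+h} f = integral {0..s+h} f"
    by (rule Henstock_Kurzweil_Integration.integral_combine) (use s int in auto)
  have ib: "norm (integral {s..s+h} f) \<le> b * (s + h - s)"
  proof (rule integral_bound)
    show "continuous_on {s..s+h} f" by (rule continuous_on_subset[OF cont]) (use s in auto)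
    show "\<And>t. t \<in> {s..s+h} \<Longrightarrow> norm (f t) \<le> b" using bnd s by (auto intro: less_imp_le)
  qed (use s in auto)
  have e1: "f (s+h) = - \<alpha> * integral {0..s+h} f + w (s+h)" using eq s by simp
  have e2: "f s = - \<alpha> * integral {0..s} f + w s" using eq s by simp
  have e3: "\<alpha> * integral {0..s+h} f = \<alpha> * integral {0..s} f + \<alpha> * integral {s..s+h} f"
    using comb by (simp add: distrib_left[symmetric])
  have d: "w (s+h) - w s = f (s+h) - f s + \<alpha> * integral {s..s+h} f"
    using e1 e2 e3 by linarith
  have "\<bar>f (s+h)\<bar> < b" "\<bar>f s\<bar> < b" using bnd s by auto
  moreover have "\<bar>\<alpha> * integral {s..s+h} f\<bar> \<le> \<alpha> * (b * h)" using ib a by (simp add: abs_mult)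
  moreover have "\<bar>f (s+h) - f s + \<alpha> * integral {s..s+h} f\<bar> \<le> \<bar>f (s+h)\<bar> + \<bar>f s\<bar> + \<bar>\<alpha> * integral {s..s+h} f\<bar>"
    by linarith
  moreover have "b * (2 + \<alpha> * h) = b + b + \<alpha> * (b * h)" by (simp add: algebra_simps)
  ultimately show ?thesis unfolding d by linarith
qed



lemma pow_le_exp: assumes "0 \<le> q" "q \<le> 1" shows "(1 - q) ^ N \<le> exp (- q * real N)"
proof -
  have "(1 - q) ^ N \<le> exp (-q) ^ N"
    using assms by (intro power_mono) (auto simp: exp_ge_add_one_self[of "-q", simplified] 
      intro: order_trans[OF _ exp_ge_add_one_self])
  also have "\<dots> = exp (- q * real N)" by (simp add: exp_of_nat_mult[symmetric] mult.commute)
  finally show ?thesis .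
qed

lemma D_ge: fixes l :: real assumes "l > 0" shows "exp (4*l^2) - exp (l^2) \<ge> 3 * l^2"
proof -
  have e: "exp (4*l^2) = exp (l^2) * exp (3*l^2)" by (simp add: exp_add[symmetric])
  have h1: "exp (3*l^2) \<ge> 1 + 3*l^2" by (rule exp_ge_add_one_self)
  have h2: "exp (l^2) \<ge> 1" by simp
  have h3: "3*l^2 \<le> exp (3*l^2) - 1" using h1 by linarith
  have "1 * (3*l^2) \<le> exp (l^2) * (exp (3*l^2) - 1)"
    by (rule mult_mono[OF h2 h3]) auto
  then show ?thesis using e by (simp add: algebra_simps)
qed

lemma exp_neg_le_inv: fixes z :: real assumes "z > 0" shows "exp (-z) \<le> 1 / z"
proof -
  have "z \<le> exp z" using exp_ge_add_one_self[of z] by linarith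
  then show ?thesis using assms by (simp add: exp_minus field_simps)
qed

lemma analytic:
  fixes \<alpha> \<delta> l :: real
  assumes a: "\<alpha>>0" and d: "\<delta>>0" and dd: "16*\<delta>^2*\<alpha> \<le> 1" and l: "l>0"
  shows "\<exists>N::nat. N \<ge> 1 \<and> (\<forall>p. 0 \<le> p \<longrightarrow>
     p \<le> \<delta>*l*(2+(exp(4*l^2) - exp(l^2))/N)* sqrt \<alpha>/sqrt((exp(4*l^2) - exp(l^2))/N) \<longrightarrow>
     p \<le> 1 - exp(-(\<delta>*l*(2+(exp(4*l^2) - exp(l^2))/N)* sqrt \<alpha>/sqrt((exp(4*l^2) - exp(l^2))/N)+1)\<^sup>2/2)/3 \<longrightarrow>
     p^N \<le> (2+exp 4)*\<delta>* sqrt \<alpha> + sqrt \<delta> + 96*\<delta>*\<alpha>)"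
proof -
  define D where "D = exp(4*l^2) - exp(l^2)"
  define S where "S = (2+exp 4)*\<delta>* sqrt \<alpha> + sqrt \<delta> + 96*\<delta>*\<alpha>"
  have S1: "(2+exp 4)*\<delta>* sqrt \<alpha> \<ge> 0" "sqrt \<delta> \<ge> 0" "96*\<delta>*\<alpha> \<ge> 0" using a d by auto
  have D3: "D \<ge> 3*l^2" unfolding D_def by (rule D_ge[OF l])
  have Dpos: "D > 0" using D3 l by (smt (verit) zero_less_power)
  have main: "\<exists>N::nat. N \<ge> 1 \<and> (\<forall>p. 0 \<le> p \<longrightarrow>
     p \<le> \<delta>*l*(2+D/N)* sqrt \<alpha>/sqrt(D/N) \<longrightarrow>
     p \<le> 1 - exp(-(\<delta>*l*(2+D/N)* sqrt \<alpha>/sqrt(D/N)+1)\<^sup>2/2)/3 \<longrightarrow>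
     p^N \<le> S)"
  proof (cases "l \<le> 1")
    case True
    show ?thesis
    proof (intro exI[of _ 1] conjI allI impI)
      fix p :: real assume p: "p \<le> \<delta>*l*(2+D/real (1::nat))* sqrt \<alpha>/sqrt(D/real (1::nat))"
      have "l^2 \<le> D" using D3 by (smt (verit) zero_le_power2)
      then have lD: "l \<le> sqrt D" using l by (simp add: real_le_rsqrt)
      have "D \<le> exp (4*l^2)" unfolding D_def by simp
      also have "\<dots> \<le> exp 4" using True l by (simp add: power_le_one)
      finally have D4: "D \<le> exp 4" .
      have "\<delta>*l*(2+D)* sqrt \<alpha>/sqrt D = \<delta>*(2+D)* sqrt \<alpha> * (l/sqrt D)" by simp
      also have "\<dots> \<le> \<delta>*(2+D)* sqrt \<alpha> * 1"
      proof (rule mult_left_mono)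
        show "0 \<le> \<delta>*(2+D)* sqrt \<alpha>" using Dpos d a by simp
        show "l / sqrt D \<le> 1" using lD Dpos by simp
      qed
      also have "\<dots> \<le> (2+exp 4)*\<delta>* sqrt \<alpha>"
        using D4 d a by (simp add: mult_right_mono mult_left_mono mult.assoc mult.left_commute)
      finally have "p \<le> (2+exp 4)*\<delta>* sqrt \<alpha>" using p by simp
      then show "p ^ 1 \<le> S" unfolding S_def power_one_right using S1 by linarith
    qed simp
  next
    case False
    then have l1: "l > 1" by simp
    have "exp (3*l^2) \<ge> 1 + 3*l^2" by (rule exp_ge_add_one_self)
    moreover have "l^2 > 1" using l1 by (simp add: less_1_mult power2_eq_square)
    ultimately have e3: "exp (3*l^2) \<ge> 2" by linarith
    have e: "exp (4*l^2) = exp (l^2) * exp (3*l^2)" by (simp add: exp_add[symmetric])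
    have "exp (l^2) * 2 \<le> exp (l^2) * exp (3*l^2)" using e3 by simp
    then have D2: "D \<ge> exp (4*l^2) / 2" unfolding D_def using e by linarith
    have "exp (4*l^2) \<ge> 1 + 4*l^2" by (rule exp_ge_add_one_self)
    then have Dge2: "D \<ge> 2" using D2 \<open>l^2 > 1\<close> by linarith
    define N where "N = nat \<lfloor>D\<rfloor>"
    have NR: "real N = of_int \<lfloor>D\<rfloor>" unfolding N_def using Dge2 by simp
    have N1: "real N \<le> D" "D < real N + 1" unfolding NR by linarith+
    have N2: "real N \<ge> 1" using N1 Dge2 by linarith
    have Ng: "N \<ge> 1" using N2 by simp
    define u where "u = D / real N"
    have u1: "u \<ge> 1" "u \<le> 2" unfolding u_def using N1 N2 by (auto simp: field_simps)
    have ND: "real N \<ge> D/2" using N1 N2 by linarith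
    define x where "x = \<delta>*l*(2+u)* sqrt \<alpha>/sqrt u"
    have x0: "x \<ge> 0" unfolding x_def using d l a u1 by simp
    have x4: "x \<le> 4*\<delta>*l* sqrt \<alpha>"
    proof -
      have su: "sqrt u \<ge> 1" using u1 by simp
      have "(2+u) \<le> 4 * sqrt u" using u1 su by linarith
      then have "(2+u)/sqrt u \<le> 4" using su by (simp add: divide_le_eq)
      then have "\<delta>*l* sqrt \<alpha> * ((2+u)/sqrt u) \<le> \<delta>*l* sqrt \<alpha> * 4"
        using d l a by (intro mult_left_mono) auto
      then show ?thesis unfolding x_def by (simp add: mult_ac)
    qed
    show ?thesis
    proof (intro exI[of _ N] conjI allI impI Ng)
      fix p :: real assume p0: "0 \<le> p" and px: "p \<le> \<delta>*l*(2+D/real N)* sqrt \<alpha>/sqrt(D/real N)"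
        and pt: "p \<le> 1 - exp(-(\<delta>*l*(2+D/real N)* sqrt \<alpha>/sqrt(D/real N)+1)\<^sup>2/2)/3"
      have px': "p \<le> x" using px unfolding x_def u_def .
      have pt': "p \<le> 1 - exp(-(x+1)\<^sup>2/2)/3" using pt unfolding x_def u_def .
      have p1: "p \<le> 1" using pt' exp_gt_zero[of "-(x+1)\<^sup>2/2"] by linarith
      show "p ^ N \<le> S"
      proof (cases "4*\<delta>*l* sqrt \<alpha> \<le> sqrt \<delta>")
        case True
        have "p ^ N \<le> p ^ 1" using p0 p1 Ng by (intro power_decreasing) auto
        also have "\<dots> \<le> sqrt \<delta>" using px' x4 True by simp
        finally show ?thesis unfolding S_def using S1 by linarith
      next
        case False
        then have "(sqrt \<delta>)^2 < (4*\<delta>*l* sqrt \<alpha>)^2" using d by (intro power_strict_mono) auto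
        then have "\<delta> < 16*\<delta>^2*l^2*\<alpha>" using d a by (simp add: power_mult_distrib)
        then have big: "1 < 16*\<delta>*\<alpha>*l^2" using d by (simp add: power2_eq_square field_simps)
        have "(4*\<delta>* sqrt \<alpha>)^2 \<le> 1^2" using dd a by (simp add: power_mult_distrib)
        then have h4: "4*\<delta>* sqrt \<alpha> \<le> 1" using power2_le_imp_le[of "4*\<delta>* sqrt \<alpha>" 1] by simp
        have "4*\<delta>*l* sqrt \<alpha> \<le> l" using mult_right_mono[OF h4, of l] l by (simp add: mult_ac)
        then have xl: "x + 1 \<le> 2*l" using x4 l1 by linarith
        have "(x+1)^2 \<le> (2*l)^2" using xl x0 by (intro power_mono) auto
        then have "-(x+1)\<^sup>2/2 \<ge> -2*l^2" by (simp add: power_mult_distrib)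
        then have ex: "exp(-(x+1)\<^sup>2/2) \<ge> exp (-2*l^2)" by simp
        define q where "q = exp (-2*l^2) / 3"
        have "exp (-2*l^2) \<le> exp 0" using l by (subst exp_le_cancel_iff) simp
        then have e1: "exp (-2*l^2) \<le> 1" by simp
        have q0: "0 \<le> q" "q \<le> 1" unfolding q_def using e1 exp_gt_zero[of "-2*l^2"] by linarith+
        have pq: "p \<le> 1 - q" using pt' ex unfolding q_def by linarith
        have "p ^ N \<le> (1-q)^N" using p0 pq by (intro power_mono) auto
        also have "\<dots> \<le> exp (- q * real N)" by (rule pow_le_exp[OF q0])
        also have "\<dots> \<le> exp (- (exp (2*l^2) / 12))"
        proof -
          have "q * real N \<ge> q * (exp (4*l^2)/4)" using ND D2 q0 by (intro mult_left_mono) auto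
          moreover have "q * (exp (4*l^2)/4) = exp (2*l^2) / 12"
          proof -
            have "exp (-2*l^2) * exp (4*l^2) = exp (2*l^2)" by (simp add: exp_add[symmetric])
            then show ?thesis unfolding q_def by simp
          qed
          ultimately show ?thesis by simp
        qed
        also have "\<dots> \<le> 1 / (exp (2*l^2) / 12)" by (rule exp_neg_le_inv) simp
        also have "\<dots> \<le> 12 / (1 + 2*l^2)"
        proof -
          have "1 + 2*l^2 \<le> exp (2*l^2)" by (rule exp_ge_add_one_self)
          moreover have "1 / (exp (2*l^2) / 12) = 12 / exp (2*l^2)" by simp
          ultimately show ?thesis by (metis frac_le[of 12 12 "1 + 2*l^2" "exp (2*l^2)"] 
             add_pos_nonneg zero_less_one zero_le_power2 mult_nonneg_nonneg zero_le_numeral order_refl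
             zero_le_numeral)
        qed
        also have "\<dots> \<le> 12 / (2*l^2)" using l by (intro divide_left_mono) (auto intro!: mult_pos_pos add_pos_nonneg)
        also have "\<dots> = 6 / l^2" by simp
        also have "\<dots> \<le> 96*\<delta>*\<alpha>"
        proof -
          have "6 \<le> 96*\<delta>*\<alpha> * l^2" using big by linarith
          then show ?thesis using l by (simp add: divide_le_eq)
        qed
        finally show ?thesis unfolding S_def using S1 by linarith
      qed
    qed
  qed
  then show ?thesis unfolding D_def S_def .
qed



lemma clock_iff:
  assumes a: "\<alpha> > 0" and l: "l > 0"
  shows "sqrt_log_clock \<alpha> t \<ge> ereal l \<longleftrightarrow> ennreal ((exp (l^2) - 1)/\<alpha>) \<le> t"
proof (cases "t = \<top>")
  case True then show ?thesis by (simp add: sqrt_log_clock_def)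
next
  case False
  define r where "r = enn2real t"
  have r0: "r \<ge> 0" unfolding r_def by simp
  have t: "t = ennreal r" unfolding r_def using False by (simp add: less_top)
  have pos: "1 + \<alpha> * r > 0" using a r0 by (simp add: add_pos_nonneg)
  have "sqrt_log_clock \<alpha> t \<ge> ereal l \<longleftrightarrow> l \<le> sqrt (ln (1 + \<alpha> * r))"
    using False unfolding sqrt_log_clock_def r_def by simp
  also have "\<dots> \<longleftrightarrow> l^2 \<le> ln (1 + \<alpha> * r)"
  proof
    assume "l \<le> sqrt (ln (1 + \<alpha> * r))"
    then have "l^2 \<le> (sqrt (ln (1 + \<alpha> * r)))^2" using l by (intro power_mono) auto
    moreover have "ln (1 + \<alpha> * r) \<ge> 0" using a r0 by simp
    ultimately show "l^2 \<le> ln (1 + \<alpha> * r)" by simp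
  next
    assume "l^2 \<le> ln (1 + \<alpha> * r)"
    then show "l \<le> sqrt (ln (1 + \<alpha> * r))" using l by (intro real_le_rsqrt)
  qed
  also have "\<dots> \<longleftrightarrow> exp (l^2) \<le> 1 + \<alpha> * r" by (rule ln_ge_iff[OF pos])
  also have "\<dots> \<longleftrightarrow> (exp (l^2) - 1)/\<alpha> \<le> r" using a by (simp add: divide_le_eq algebra_simps)
  also have "\<dots> \<longleftrightarrow> ennreal ((exp (l^2) - 1)/\<alpha>) \<le> t" unfolding t using r0 by simp
  finally show ?thesis .
qed

lemma stop_ge_meas:
  assumes fp: "filtered_prob_space M F" and st: "is_stopping_time F \<tau>" and T: "T > 0"
  shows "{\<omega>\<in>space M. ennreal T \<le> \<tau> \<omega>} \<in> sets M"
proof -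
  have sp: "\<And>u. space (F u) = space M" and sub: "\<And>u. sets (F u) \<subseteq> sets M"
    using fp unfolding filtered_prob_space_def by auto
  define m where "m = (\<lambda>n::nat. max 0 (T - 1 / real (Suc n)))"
  have Un: "(\<Union>n. {\<omega>\<in>space M. \<tau> \<omega> \<le> ennreal (m n)}) \<in> sets M"
  proof -
    have each: "{\<omega>\<in>space M. \<tau> \<omega> \<le> ennreal (m n)} \<in> sets M" for n
    proof -
    have "m n \<ge> 0" unfolding m_def by simp
    then have "{\<omega>\<in>space (F (m n)). \<tau> \<omega> \<le> ennreal (m n)} \<in> sets (F (m n))"
      using st unfolding is_stopping_time_def by auto
    then show "{\<omega>\<in>space M. \<tau> \<omega> \<le> ennreal (m n)} \<in> sets M" using sp sub by auto
    qed
    then show ?thesis by (intro sets.countable_nat_UN) auto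
  qed
  have eq: "{\<omega>\<in>space M. ennreal T \<le> \<tau> \<omega>} = space M - (\<Union>n. {\<omega>\<in>space M. \<tau> \<omega> \<le> ennreal (m n)})"
  proof (intro set_eqI iffI)
    fix \<omega> assume "\<omega> \<in> {\<omega>\<in>space M. ennreal T \<le> \<tau> \<omega>}"
    then have w: "\<omega> \<in> space M" "ennreal T \<le> \<tau> \<omega>" by auto
    have "\<not> \<tau> \<omega> \<le> ennreal (m n)" for n
    proof
      assume h: "\<tau> \<omega> \<le> ennreal (m n)"
      have "m n < T" unfolding m_def using T by simp
      then have "ennreal (m n) < ennreal T" using T unfolding m_def by (simp add: ennreal_lessI)
      then show False using h w(2) by simp
    qed
    then show "\<omega> \<in> space M - (\<Union>n. {\<omega>\<in>space M. \<tau> \<omega> \<le> ennreal (m n)})" using w by auto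
  next
    fix \<omega> assume "\<omega> \<in> space M - (\<Union>n. {\<omega>\<in>space M. \<tau> \<omega> \<le> ennreal (m n)})"
    then have w: "\<omega> \<in> space M" "\<And>n. \<not> \<tau> \<omega> \<le> ennreal (m n)" by auto
    have "ennreal T \<le> \<tau> \<omega>"
    proof (rule ccontr)
      assume "\<not> ennreal T \<le> \<tau> \<omega>"
      then have lt: "\<tau> \<omega> < ennreal T" by simp
      then have "\<tau> \<omega> \<noteq> \<top>" by auto
      define r where "r = enn2real (\<tau> \<omega>)"
      have r0: "r \<ge> 0" and tr: "\<tau> \<omega> = ennreal r" unfolding r_def using \<open>\<tau> \<omega> \<noteq> \<top>\<close> by (auto simp: less_top)
      have "r < T" using lt tr r0 by (simp add: ennreal_less_iff)
      then obtain n where n: "n > 0" "inverse (real n) < T - r" using ex_inverse_of_nat_less[of "T - r"] by auto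
      have "1 / real (Suc n) \<le> inverse (real n)" using n by (simp add: divide_simps)
      then have "r \<le> m n" unfolding m_def using n by simp
      then have "\<tau> \<omega> \<le> ennreal (m n)" unfolding tr by (rule ennreal_leI)
      then show False using w by simp
    qed
    then show "\<omega> \<in> {\<omega>\<in>space M. ennreal T \<le> \<tau> \<omega>}" using w by simp
  qed
  show ?thesis unfolding eq using Un by (intro sets.Diff) auto
qed



theorem lemma3p4:
  fixes M :: "'a measure" and F :: "real \<Rightarrow> 'a measure"
    and W X :: "real \<Rightarrow> 'a \<Rightarrow> real" and \<alpha> :: real
  assumes "\<alpha> > 0"
    and "filtered_prob_space M F"
    and "std_brownian_motion M F W"
    and "ou_solution M F \<alpha> W X"
  shows "\<exists>\<phi> :: real \<Rightarrow> real. (\<forall>\<delta>>0. \<phi> \<delta> \<ge> 0) \<and> (\<phi> \<longlongrightarrow> 0) (at_right 0) \<and>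
    (\<forall>\<tau> \<delta> l. is_stopping_time F \<tau> \<longrightarrow> \<delta> > 0 \<longrightarrow> l > 0 \<longrightarrow>
       measure M {\<omega>\<in>space M. sqrt_log_clock \<alpha> (\<tau> \<omega>) \<ge> ereal (2 * l)
                             \<and> run_max X \<tau> \<omega> < ereal (\<delta> * l)}
       \<le> \<phi> \<delta> * measure M {\<omega>\<in>space M. sqrt_log_clock \<alpha> (\<tau> \<omega>) \<ge> ereal l})"
proof -
  note a = assms(1) and fp = assms(2) and bm = assms(3) and ou = assms(4)
  have P: "prob_space M" and sp: "\<And>u. space (F u) = space M" and sub: "\<And>u. sets (F u) \<subseteq> sets M"
    using fp unfolding filtered_prob_space_def by auto
  interpret prob_space M by fact
  define S where "S = (\<lambda>\<delta>::real. (2+exp 4)*\<delta>* sqrt \<alpha> + sqrt \<delta> + 96*\<delta>*\<alpha>)"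
  define \<phi> where "\<phi> = (\<lambda>\<delta>. if 16*\<delta>^2*\<alpha> \<le> 1 then S \<delta> else 1)"
  have S0: "S \<delta> \<ge> 0" if "\<delta> > 0" for \<delta> unfolding S_def using that a by simp
  have phi0: "\<forall>\<delta>>0. \<phi> \<delta> \<ge> 0" unfolding \<phi>_def using S0 by simp
  have lim: "(\<phi> \<longlongrightarrow> 0) (at_right 0)"
  proof (rule Lim_transform_eventually)
    have "(S \<longlongrightarrow> (2+exp 4)*0* sqrt \<alpha> + sqrt 0 + 96*0*\<alpha>) (at_right 0)"
      unfolding S_def by (intro tendsto_intros)
    then show "(S \<longlongrightarrow> 0) (at_right 0)" by simp
    show "eventually (\<lambda>\<delta>. S \<delta> = \<phi> \<delta>) (at_right (0::real))"
      unfolding eventually_at_right_field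
    proof (intro exI[of _ "min 1 (1/(16*\<alpha>))"] conjI allI impI)
      show "(0::real) < min 1 (1/(16*\<alpha>))" using a by simp
      fix y :: real assume y: "0 < y" "y < min 1 (1/(16*\<alpha>))"
      have "y^2 \<le> y" using y by (simp add: power2_eq_square mult_le_cancel_right1 less_imp_le)
      then have "16*y^2*\<alpha> \<le> 16*y*\<alpha>" using a by simp
      also have "\<dots> \<le> 1" using y a by (simp add: field_simps)
      finally show "S y = \<phi> y" unfolding \<phi>_def by simp
    qed
  qed
  have main: "measure M {\<omega>\<in>space M. sqrt_log_clock \<alpha> (\<tau> \<omega>) \<ge> ereal (2 * l)
                             \<and> run_max X \<tau> \<omega> < ereal (\<delta> * l)}
       \<le> \<phi> \<delta> * measure M {\<omega>\<in>space M. sqrt_log_clock \<alpha> (\<tau> \<omega>) \<ge> ereal l}"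
    if st: "is_stopping_time F \<tau>" and d: "\<delta> > 0" and l: "l > 0" for \<tau> \<delta> l
  proof -
    define T1 where "T1 = (exp (l^2) - 1)/\<alpha>"
    define T2 where "T2 = (exp (4*l^2) - 1)/\<alpha>"
    define L where "L = {\<omega>\<in>space M. sqrt_log_clock \<alpha> (\<tau> \<omega>) \<ge> ereal (2 * l)
                             \<and> run_max X \<tau> \<omega> < ereal (\<delta> * l)}"
    define R where "R = {\<omega>\<in>space M. sqrt_log_clock \<alpha> (\<tau> \<omega>) \<ge> ereal l}"
    have T1pos: "T1 > 0" unfolding T1_def using a l by simp
    have T12: "T1 < T2" unfolding T1_def T2_def using a l by (simp add: divide_strict_right_mono)
    have R_eq: "R = {\<omega>\<in>space M. ennreal T1 \<le> \<tau> \<omega>}"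
      unfolding R_def T1_def using clock_iff[OF a l] by simp
    have Rm: "R \<in> sets M" unfolding R_eq by (rule stop_ge_meas[OF fp st T1pos])
    have L2: "ennreal T2 \<le> \<tau> \<omega>" if "\<omega> \<in> L" for \<omega>
    proof -
      have "(2*l)^2 = 4*l^2" by (simp add: power_mult_distrib)
      then show ?thesis using that clock_iff[OF a, of "2*l" "\<tau> \<omega>"] l unfolding L_def T2_def by simp
    qed
    have LR: "L \<subseteq> R"
    proof
      fix \<omega> assume w: "\<omega> \<in> L"
      have "ennreal T1 \<le> ennreal T2" using T12 by (simp add: ennreal_leI)
      then show "\<omega> \<in> R" unfolding R_eq using L2[OF w] w unfolding L_def by auto
    qed
    show ?thesis
    proof (cases "16*\<delta>^2*\<alpha> \<le> 1")
      case False
      then have "\<phi> \<delta> = 1" unfolding \<phi>_def by simp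
      then show ?thesis using finite_measure_mono[OF LR Rm] unfolding L_def R_def by simp
    next
      case small: True
      have phiS: "\<phi> \<delta> = S \<delta>" unfolding \<phi>_def using small by simp
      define D where "D = exp (4*l^2) - exp (l^2)"
      obtain N :: nat where N1: "N \<ge> 1" and Nb: "\<And>p. 0 \<le> p \<Longrightarrow>
         p \<le> \<delta>*l*(2+D/N)* sqrt \<alpha>/sqrt(D/N) \<Longrightarrow>
         p \<le> 1 - exp(-(\<delta>*l*(2+D/N)* sqrt \<alpha>/sqrt(D/N)+1)\<^sup>2/2)/3 \<Longrightarrow>
         p^N \<le> S \<delta>"
        using analytic[OF a d small l] unfolding D_def S_def by blast
      have Dpos: "D > 0" unfolding D_def using D_ge[OF l] l by (smt (verit) zero_less_power)
      define h where "h = (D/N)/\<alpha>"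
      have hpos: "h > 0" unfolding h_def using Dpos N1 a by simp
      have ah: "\<alpha> * h = D/N" unfolding h_def using a by simp
      have T2eq: "T1 + real N * h = T2" unfolding h_def T1_def T2_def D_def using N1 a
        by (simp add: field_simps)
      define c where "c = \<delta>*l*(2+\<alpha>*h)"
      have cpos: "c > 0" unfolding c_def using d l a hpos by (intro mult_pos_pos add_pos_pos) auto
      define x where "x = c / sqrt h"
      have xeq: "x = \<delta>*l*(2+D/N)* sqrt \<alpha>/sqrt(D/N)"
      proof -
        have "sqrt h = sqrt (D/N) / sqrt \<alpha>" unfolding h_def by (simp add: real_sqrt_divide real_sqrt_mult)
        then show ?thesis unfolding x_def c_def ah by simp
      qed
      have x0: "x \<ge> 0" unfolding x_def using cpos hpos by simp
      define q where "q = min x (1 - exp(-(x+1)\<^sup>2/2)/3)"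
      have "exp(-(x+1)\<^sup>2/2) \<le> exp 0" by (subst exp_le_cancel_iff) simp
      then have "exp(-(x+1)\<^sup>2/2) \<le> 1" by simp
      then have q0: "q \<ge> 0" unfolding q_def using x0 by linarith
      have qN: "q^N \<le> S \<delta>"
        by (rule Nb) (use q0 in \<open>auto simp: q_def xeq[symmetric]\<close>)
      have qb: "measure M {\<omega>\<in>space M. \<bar>W (s+h) \<omega> - W s \<omega>\<bar> < c} \<le> q" if s0: "s \<ge> 0" for s
      proof -
        have "distributed M lborel (\<lambda>\<omega>. W (s+h) \<omega> - W s \<omega>)
               (\<lambda>x. ennreal (normal_density 0 (sqrt ((s+h) - s)) x))"
        proof -
          have D0: "\<forall>s t. 0 \<le> s \<longrightarrow> s < t \<longrightarrow>
            distributed M lborel (\<lambda>\<omega>. W t \<omega> - W s \<omega>) (\<lambda>x. ennreal (normal_density 0 (sqrt (t - s)) x))"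
            using bm unfolding std_brownian_motion_def by blast
          show ?thesis using D0[rule_format, of s "s+h"] s0 hpos by simp
        qed
        then have Dd: "distributed M lborel (\<lambda>\<omega>. W (s+h) \<omega> - W s \<omega>)
               (\<lambda>x. ennreal (normal_density 0 (sqrt h) x))" by simp
        have sh: "sqrt h > 0" using hpos by simp
        show ?thesis unfolding q_def x_def
          using gauss_upper[OF P Dd sh cpos] gauss_tail[OF P Dd sh cpos] by simp
      qed
      define A where "A = space M - {\<omega>\<in>space (F T1). \<tau> \<omega> \<le> ennreal T1}"
      have Am: "A \<in> sets (F T1)"
      proof -
        have "{\<omega>\<in>space (F T1). \<tau> \<omega> \<le> ennreal T1} \<in> sets (F T1)"
          using st T1pos unfolding is_stopping_time_def by auto
        then have "space (F T1) - {\<omega>\<in>space (F T1). \<tau> \<omega> \<le> ennreal T1} \<in> sets (F T1)"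
          by (rule sets.compl_sets)
        then show ?thesis unfolding A_def sp .
      qed
      define E where "E = {\<omega>\<in>space M. \<omega>\<in>A \<and> (\<forall>k<N. \<bar>W (T1 + real (Suc k)*h) \<omega> - W (T1 + real k * h) \<omega>\<bar> < c)}"
      have blk: "E \<in> sets (F (T1 + real N * h)) \<and> measure M E \<le> measure M A * q^N"
        unfolding E_def by (rule indep_blocks[OF fp bm less_imp_le[OF T1pos] hpos Am qb])
      have Em: "E \<in> sets M" using blk sub by auto
      have AR: "A \<subseteq> R" unfolding A_def R_eq sp by auto
      have good: "AE \<omega> in M. continuous_on {0..} (\<lambda>t. X t \<omega>) \<and>
        (\<forall>t\<ge>0. X t \<omega> = - \<alpha> * integral {0..t} (\<lambda>s. X s \<omega>) + W t \<omega>)"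
        using ou unfolding ou_solution_def by (auto elim: AE_mp)
      have LE: "AE \<omega> in M. \<omega> \<in> L \<longrightarrow> \<omega> \<in> E"
        using good
      proof (rule AE_mp, intro AE_I2 impI)
        fix \<omega> assume w: "\<omega> \<in> space M" and g: "continuous_on {0..} (\<lambda>t. X t \<omega>) \<and>
          (\<forall>t\<ge>0. X t \<omega> = - \<alpha> * integral {0..t} (\<lambda>s. X s \<omega>) + W t \<omega>)" and wL: "\<omega> \<in> L"
        have t2: "ennreal T2 \<le> \<tau> \<omega>" by (rule L2[OF wL])
        have "ennreal T1 < ennreal T2" using T12 T1pos by (simp add: ennreal_lessI)
        then have "\<not> \<tau> \<omega> \<le> ennreal T1" using t2 by simp
        then have wA: "\<omega> \<in> A" unfolding A_def sp using w by simp
        have bnd: "\<bar>X r \<omega>\<bar> < \<delta> * l" if r: "0 \<le> r" "r \<le> T2" for r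
        proof -
          have rT: "ennreal r \<le> ennreal T2" using r by (simp add: ennreal_leI)
          have "r \<in> {s. 0 \<le> s \<and> ennreal s \<le> \<tau> \<omega>}" using order_trans[OF rT t2] r by auto
          then have "ereal \<bar>X r \<omega>\<bar> \<le> run_max X \<tau> \<omega>" unfolding run_max_def by (rule SUP_upper)
          also have "\<dots> < ereal (\<delta> * l)" using wL unfolding L_def by simp
          finally show ?thesis by simp
        qed
        have "\<bar>W (T1 + real (Suc k)*h) \<omega> - W (T1 + real k * h) \<omega>\<bar> < c" if k: "k < N" for k
        proof -
          have e: "T1 + real (Suc k)*h = (T1 + real k * h) + h" by (simp add: algebra_simps)
          have "real (Suc k) * h \<le> real N * h" using k hpos by (intro mult_right_mono) auto
          then have le: "(T1 + real k * h) + h \<le> T2" using T2eq e by linarith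
          have s0: "0 \<le> T1 + real k * h" using T1pos hpos by simp
          show ?thesis unfolding e c_def
            by (rule path_incr[where f="\<lambda>t. X t \<omega>" and T=T2]) (use g bnd s0 le hpos a in auto)
        qed
        then show "\<omega> \<in> E" unfolding E_def using w wA by auto
      qed
      have "measure M L \<le> measure M E" by (rule finite_measure_mono_AE[OF LE Em])
      also have "\<dots> \<le> measure M A * q^N" using blk by simp
      also have "\<dots> \<le> measure M A * S \<delta>" using qN by (intro mult_left_mono) auto
      also have "\<dots> \<le> measure M R * S \<delta>"
        using finite_measure_mono[OF AR Rm] S0[OF d] by (intro mult_right_mono) auto
      finally show ?thesis unfolding L_def R_def phiS by (simp add: mult.commute)
    qed
  qed
  show ?thesis using phi0 lim main by blast
qed

end
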